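(* Let $\mathbb{T}^3=\mathbb{R}^3/\mathbb{Z}^3$ and consider smooth time-dependent fields $\mathbf{u}_1(\mathbf{x}_1,t)$, $\mathbf{u}_2(\mathbf{x}_1,\mathbf{x}_2,t)$ on $\mathbf{x}_1,\mathbf{x}_2\in\mathbb{T}^3$ (periodic boundary conditions in both variables) with $\nabla_1\cdot\mathbf{u}_1=0$ and $\nabla_2\cdot\mathbf{u}_2=0$. Let $\ell(\mathbf{u}_1,\mathbf{u}_2)$ be a Lagrangian with momenta $\mathbf{m}_1=\delta\ell/\delta\mathbf{u}_1$ and $\mathbf{m}_2=\delta\ell/\delta\mathbf{u}_2$, and suppose that, for some pressures $\mathsf{p}_1(\mathbf{x}_1,t)$, $\mathsf{p}_2(\mathbf{x}_1,\mathbf{x}_2,t)$, the fields satisfy \[ \frac{\partial\mathbf{m}_1}{\partial t}+\mathbf{u}_1\cdot\nabla_1\mathbf{m}_1+(\nabla_1\mathbf{u}_1)^{T}\cdot\mathbf{m}_1+\int(\nabla_1\mathbf{u}_2)^{T}\cdot\mathbf{m}_2\,{\rm d}^3x_2=-\nabla_1\mathsf{p}_1, \] \[ \frac{\partial\mathbf{m}_2}{\partial t}+\mathbf{u}_1\cdot\nabla_1\mathbf{m}_2-\mathbf{u}_2\times(\nabla_2\times\mathbf{m}_2)=-\nabla_2\mathsf{p}_2 . \] Define the fluctuation helicity density \[ \mathcal{H}(\mathbf{x}_1,t)=\int\mathbf{m}_2\cdot(\nabla_2\times\mathbf{m}_2)\,{\rm d}^3x_2 . \] Then the total fluctuation helicity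 is preserved: $\dfrac{d}{dt}\displaystyle\int\mathcal{H}\,{\rm d}^3x_1=0$.
   Context: Two-scale periodic setting: $\mathbf{x}_1$ is the resolved (mean-flow) variable and $\mathbf{x}_2$ the subgrid (fluctuation) variable, both in the unit periodic cube; integrals over $\mathbf{x}_1$ and $\mathbf{x}_2$ are over $\mathbb{T}^3$. $\nabla_1=\partial/\partial\mathbf{x}_1$, $\nabla_2=\partial/\partial\mathbf{x}_2$. For a vector $\mathbf{u}$ and covector $\mathbf{v}$, $(\nabla\mathbf{u})^T\cdot\mathbf{v}$ denotes the vector $v_j\nabla u^j$. *)

theory Defs
  imports "HOL-Analysis.Analysis"
begin

fun iter_dd :: "'a::euclidean_space list \<Rightarrow> ('a \<Rightarrow> 'b::real_normed_vector) \<Rightarrow> 'a \<Rightarrow> 'b" where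
  "iter_dd [] f = f"
| "iter_dd (v # vs) f = (\<lambda>x. frechet_derivative (iter_dd vs f) (at x) v)"

definition smooth_map :: "('a::euclidean_space \<Rightarrow> 'b::real_normed_vector) \<Rightarrow> bool" where
  "smooth_map f \<longleftrightarrow> (\<forall>vs. continuous_on UNIV (iter_dd vs f) \<and> (\<forall>x. iter_dd vs f differentiable (at x)))"

text \<open>Z^3-periodicity in a variable of R^3 (function on the torus T^3).\<close>
definition periodic3 :: "(real^3 \<Rightarrow> 'b) \<Rightarrow> bool" where
  "periodic3 g \<longleftrightarrow> (\<forall>x (i::3). g (x + axis i 1) = g x)"

definition torus_int :: "(real^3 \<Rightarrow> 'b::euclidean_space) \<Rightarrow> 'b" where
  "torus_int g = integral (cbox (0::real^3) 1) g"

definition pd :: "3 \<Rightarrow> (real^3 \<Rightarrow> 'b::real_normed_vector) \<Rightarrow> real^3 \<Rightarrow> 'b" where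
  "pd i g x = vector_derivative (\<lambda>s. g (x + s *\<^sub>R axis i 1)) (at 0)"

definition dt :: "(real \<Rightarrow> 'b::real_normed_vector) \<Rightarrow> real \<Rightarrow> 'b" where
  "dt g t = vector_derivative g (at t)"

definition grad :: "(real^3 \<Rightarrow> real) \<Rightarrow> real^3 \<Rightarrow> real^3" where
  "grad g x = (\<chi> i. pd i g x)"

definition divg :: "(real^3 \<Rightarrow> real^3) \<Rightarrow> real^3 \<Rightarrow> real" where
  "divg g x = (\<Sum>i\<in>UNIV. pd i (\<lambda>y. g y $ i) x)"

definition curl :: "(real^3 \<Rightarrow> real^3) \<Rightarrow> real^3 \<Rightarrow> real^3" where
  "curl g x = vector [pd 2 (\<lambda>y. g y $ 3) x - pd 3 (\<lambda>y. g y $ 2) x,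
                      pd 3 (\<lambda>y. g y $ 1) x - pd 1 (\<lambda>y. g y $ 3) x,
                      pd 1 (\<lambda>y. g y $ 2) x - pd 2 (\<lambda>y. g y $ 1) x]"

definition adv :: "real^3 \<Rightarrow> (real^3 \<Rightarrow> real^3) \<Rightarrow> real^3 \<Rightarrow> real^3" where
  "adv v g x = (\<Sum>i\<in>UNIV. (v $ i) *\<^sub>R pd i g x)"

text \<open>(nabla u)^T . m : the vector with i-th component m_j d_i u^j.\<close>
definition gradT :: "(real^3 \<Rightarrow> real^3) \<Rightarrow> real^3 \<Rightarrow> real^3 \<Rightarrow> real^3" where
  "gradT u m x = (\<chi> i. m \<bullet> pd i u x)"

end

theory Submission
  imports Defs
begin

lemma iter_dd_append: "iter_dd vs (iter_dd ws f) = iter_dd (vs @ ws) f"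
  by (induction vs) auto

lemma smooth_iter: "smooth_map f \<Longrightarrow> smooth_map (iter_dd ws f)"
  by (simp add: smooth_map_def iter_dd_append)

lemma smooth_cont: "smooth_map f \<Longrightarrow> continuous_on UNIV f"
  unfolding smooth_map_def by (metis iter_dd.simps(1))

lemma smooth_diff: "smooth_map f \<Longrightarrow> f differentiable (at z)"
  unfolding smooth_map_def by (metis iter_dd.simps(1))

lemma smooth_deriv: "smooth_map f \<Longrightarrow> (f has_derivative (\<lambda>w. iter_dd [w] f z)) (at z)"
  using smooth_diff[of f z] by (simp add: frechet_derivative_works)

lemma smooth_cont1: "smooth_map f \<Longrightarrow> continuous_on UNIV (iter_dd [w] f)"
  unfolding smooth_map_def by blast

definition C1 :: "('a::real_normed_vector \<Rightarrow> 'b::real_normed_vector) \<Rightarrow> ('a \<Rightarrow> 'a \<Rightarrow> 'b) \<Rightarrow> bool" where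
  "C1 f f' \<longleftrightarrow> (\<forall>z. (f has_derivative f' z) (at z)) \<and> (\<forall>w. continuous_on UNIV (\<lambda>z. f' z w))"

lemma smooth_C1: "smooth_map f \<Longrightarrow> C1 f (\<lambda>z w. iter_dd [w] f z)"
  unfolding C1_def using smooth_deriv smooth_cont1[of f] by (auto simp del: iter_dd.simps)

lemma C1_cont: "C1 f f' \<Longrightarrow> continuous_on UNIV f"
  unfolding C1_def
  by (meson continuous_at_imp_continuous_on has_derivative_continuous)

lemma C1_deriv: "C1 f f' \<Longrightarrow> (f has_derivative f' z) (at z)"
  unfolding C1_def by blast

lemma C1_cont1: "C1 f f' \<Longrightarrow> continuous_on UNIV (\<lambda>z. f' z w)"
  unfolding C1_def by blast

lemma C1_linear: "C1 f f' \<Longrightarrow> linear (f' z)"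
  using C1_deriv has_derivative_linear by blast

lemma C1_slice:
  assumes "C1 f f'" "bounded_linear L"
  shows "C1 (\<lambda>y. f (c + L y)) (\<lambda>y v. f' (c + L y) (L v))"
  unfolding C1_def
proof safe
  fix z
  have "((\<lambda>y. c + L y) has_derivative L) (at z)"
    using assms(2) by (auto intro!: derivative_eq_intros bounded_linear_imp_has_derivative)
  from diff_chain_at[OF this C1_deriv[OF assms(1)]]
  show "((\<lambda>y. f (c + L y)) has_derivative (\<lambda>v. f' (c + L z) (L v))) (at z)"
    by (simp add: o_def)
next
  fix w
  have "continuous_on UNIV (\<lambda>y. c + L y)"
    using assms(2) by (intro continuous_intros linear_continuous_on) 
  then show "continuous_on UNIV (\<lambda>z. f' (c + L z) (L w))"
    by (rule continuous_on_compose2[OF C1_cont1[OF assms(1)]]) auto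
qed

lemma C1_path:
  assumes "C1 f f'"
  shows "((\<lambda>s. f (y + s *\<^sub>R u)) has_vector_derivative f' (y + s0 *\<^sub>R u) u) (at s0)"
proof -
  have "((\<lambda>s. y + s *\<^sub>R u) has_derivative (\<lambda>h. h *\<^sub>R u)) (at s0)"
    by (auto intro!: derivative_eq_intros)
  from diff_chain_at[OF this C1_deriv[OF assms]]
  have "((\<lambda>s. f (y + s *\<^sub>R u)) has_derivative (\<lambda>h. f' (y + s0 *\<^sub>R u) (h *\<^sub>R u))) (at s0)"
    by (simp add: o_def)
  moreover have "(\<lambda>h. f' (y + s0 *\<^sub>R u) (h *\<^sub>R u)) = (\<lambda>h. h *\<^sub>R f' (y + s0 *\<^sub>R u) u)"
    using C1_linear[OF assms] by (simp add: linear_cmul)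
  ultimately show ?thesis by (simp add: has_vector_derivative_def)
qed

lemma per_frechet:
  assumes "H differentiable (at (z + a))" "\<forall>x. H (x + a) = H x"
  shows "frechet_derivative H (at (z + a)) = frechet_derivative H (at z)"
proof -
  have d: "(H has_derivative frechet_derivative H (at (z + a))) (at (z + a))"
    using assms(1) frechet_derivative_works by blast
  have "((\<lambda>x. x + a) has_derivative id) (at z)"
    by (auto intro!: derivative_eq_intros simp: id_def)
  from diff_chain_at[OF this, of H] d
  have "((H \<circ> (\<lambda>x. x + a)) has_derivative (frechet_derivative H (at (z + a)) \<circ> id)) (at z)"
    by simp
  moreover have "H \<circ> (\<lambda>x. x + a) = H" using assms(2) by (auto simp: o_def)
  ultimately have "(H has_derivative frechet_derivative H (at (z + a))) (at z)" by simp
  then show ?thesis using frechet_derivative_at by blast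
qed

lemma smooth_per:
  assumes "smooth_map f" "\<forall>z. f (z + a) = f z"
  shows "iter_dd ws f (z + a) = iter_dd ws f z"
proof (induction ws arbitrary: z)
  case Nil then show ?case using assms by simp
next
  case (Cons w ws)
  have "iter_dd ws f differentiable (at (z + a))"
    using smooth_diff[OF smooth_iter[OF assms(1)]] by blast
  from per_frechet[OF this] Cons show ?case by simp
qed

lemma clairaut:
  fixes f :: "'a::euclidean_space \<Rightarrow> 'b::banach"
  assumes sm: "smooth_map f"
  shows "iter_dd [v, w] f x = iter_dd [w, v] f x"
proof -
  define fv where "fv = iter_dd [v] f"
  define fw where "fw = iter_dd [w] f"
  define fwv where "fwv = iter_dd [w, v] f"
  have Cf: "C1 f (\<lambda>z u. iter_dd [u] f z)" using smooth_C1[OF sm] .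
  have Cfv: "C1 fv (\<lambda>z u. iter_dd [u, v] f z)"
    using smooth_C1[OF smooth_iter[OF sm, of "[v]"]] by (simp add: fv_def iter_dd_append del: iter_dd.simps)
  have Cfw: "C1 fw (\<lambda>z u. iter_dd [u, w] f z)"
    using smooth_C1[OF smooth_iter[OF sm, of "[w]"]] by (simp add: fw_def iter_dd_append del: iter_dd.simps)
  have contwv: "continuous_on UNIV fwv"
    unfolding fwv_def using smooth_cont[OF smooth_iter[OF sm]] by blast
  have A: "integral {-1..a} (\<lambda>\<tau>. fv (x + \<tau> *\<^sub>R v + b *\<^sub>R w)) =
      f (x + a *\<^sub>R v + b *\<^sub>R w) - f (x + (-1) *\<^sub>R v + b *\<^sub>R w)" if "-1 \<le> a" for a b
  proof -
    have "((\<lambda>\<tau>. fv (x + \<tau> *\<^sub>R v + b *\<^sub>R w)) has_integral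
        (f (x + a *\<^sub>R v + b *\<^sub>R w) - f (x + (-1) *\<^sub>R v + b *\<^sub>R w))) {-1..a}"
    proof (rule fundamental_theorem_of_calculus[OF that])
      fix s assume "s \<in> {-1..a}"
      have "((\<lambda>s. f ((x + b *\<^sub>R w) + s *\<^sub>R v)) has_vector_derivative iter_dd [v] f ((x + b *\<^sub>R w) + s *\<^sub>R v)) (at s)"
        using C1_path[OF Cf] .
      then show "((\<lambda>s. f (x + s *\<^sub>R v + b *\<^sub>R w)) has_vector_derivative fv (x + s *\<^sub>R v + b *\<^sub>R w)) (at s within {-1..a})"
        by (auto simp: fv_def algebra_simps intro: has_vector_derivative_at_within)
    qed
    then show ?thesis by (rule integral_unique)
  qed
  have B: "fw (x + a *\<^sub>R v) - fw (x + (-1) *\<^sub>R v) = integral {-1..a} (\<lambda>\<tau>. fwv (x + \<tau> *\<^sub>R v))"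
    if "-1 \<le> a" for a
  proof -
    have "((\<lambda>b. integral (cbox (-1) a) (\<lambda>\<tau>. fv (x + \<tau> *\<^sub>R v + b *\<^sub>R w))) has_vector_derivative
        integral (cbox (-1) a) (\<lambda>\<tau>. fwv (x + \<tau> *\<^sub>R v + 0 *\<^sub>R w))) (at 0 within UNIV)"
    proof (rule leibniz_rule_vector_derivative[where fx="\<lambda>b \<tau>. fwv (x + \<tau> *\<^sub>R v + b *\<^sub>R w)"])
      fix b \<tau> :: real
      have "((\<lambda>s. fv ((x + \<tau> *\<^sub>R v) + s *\<^sub>R w)) has_vector_derivative iter_dd [w, v] f ((x + \<tau> *\<^sub>R v) + b *\<^sub>R w)) (at b)"
        using C1_path[OF Cfv] .
      then show "((\<lambda>b. fv (x + \<tau> *\<^sub>R v + b *\<^sub>R w)) has_vector_derivative fwv (x + \<tau> *\<^sub>R v + b *\<^sub>R w)) (at b within UNIV)"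
        by (simp add: fwv_def add.assoc)
    next
      fix b :: real
      have "continuous_on UNIV (\<lambda>\<tau>. fv (x + \<tau> *\<^sub>R v + b *\<^sub>R w))"
        by (rule continuous_on_compose2[OF C1_cont[OF Cfv]]) (auto intro!: continuous_intros)
      then show "(\<lambda>\<tau>. fv (x + \<tau> *\<^sub>R v + b *\<^sub>R w)) integrable_on cbox (-1) a"
        by (meson continuous_on_subset integrable_continuous subset_UNIV)
    next
      show "continuous_on (UNIV \<times> cbox (-1) a) (\<lambda>(b, \<tau>). fwv (x + \<tau> *\<^sub>R v + b *\<^sub>R w))"
        unfolding split_beta by (rule continuous_on_compose2[OF contwv]) (auto intro!: continuous_intros)
    qed auto
    then have d1: "((\<lambda>b. f (x + a *\<^sub>R v + b *\<^sub>R w) - f (x + (-1) *\<^sub>R v + b *\<^sub>R w)) has_vector_derivative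
        integral {-1..a} (\<lambda>\<tau>. fwv (x + \<tau> *\<^sub>R v))) (at 0)"
      using A[OF that] by simp
    have d2: "((\<lambda>b. f (x + a *\<^sub>R v + b *\<^sub>R w) - f (x + (-1) *\<^sub>R v + b *\<^sub>R w)) has_vector_derivative
        fw (x + a *\<^sub>R v) - fw (x + (-1) *\<^sub>R v)) (at 0)"
      unfolding fw_def
      using has_vector_derivative_diff[OF C1_path[OF Cf, of "x + a *\<^sub>R v" w 0] C1_path[OF Cf, of "x + (-1) *\<^sub>R v" w 0]]
      by simp
    show ?thesis using vector_derivative_unique_at[OF d2 d1] .
  qed
  have d3: "((\<lambda>a. fw (x + a *\<^sub>R v) - fw (x + (-1) *\<^sub>R v)) has_vector_derivative iter_dd [v, w] f x) (at 0)"
    using has_vector_derivative_diff[OF C1_path[OF Cfw, of x v 0] has_vector_derivative_const] by simp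
  have "((\<lambda>a. integral {-1..a} (\<lambda>\<tau>. fwv (x + \<tau> *\<^sub>R v))) has_vector_derivative fwv (x + 0 *\<^sub>R v)) (at 0 within {-1..1})"
    by (rule integral_has_vector_derivative) (auto intro!: continuous_on_compose2[OF contwv] continuous_intros)
  then have "((\<lambda>a. integral {-1..a} (\<lambda>\<tau>. fwv (x + \<tau> *\<^sub>R v))) has_vector_derivative fwv x) (at 0 within {-1<..<1})"
    by (auto intro: has_vector_derivative_within_subset)
  then have "((\<lambda>a. integral {-1..a} (\<lambda>\<tau>. fwv (x + \<tau> *\<^sub>R v))) has_vector_derivative fwv x) (at 0)"
    by (subst (asm) has_vector_derivative_within_open) auto
  then have d4: "((\<lambda>a. fw (x + a *\<^sub>R v) - fw (x + (-1) *\<^sub>R v)) has_vector_derivative fwv x) (at 0)"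
    by (rule has_vector_derivative_transform_within_open[of _ _ _ "{-1<..<1}"]) (auto simp: B[symmetric] less_imp_le)
  show ?thesis using vector_derivative_unique_at[OF d3 d4] by (simp add: fwv_def)
qed

lemma has_integral_transl:
  fixes g :: "'a::euclidean_space \<Rightarrow> 'b::real_normed_vector"
  assumes "(g has_integral k) (cbox a b)"
  shows "((\<lambda>x. g (x + d)) has_integral k) (cbox (a - d) (b - d))"
proof -
  have "((\<lambda>x. g (1 *\<^sub>R x + d)) has_integral (1 / \<bar>1\<bar> ^ DIM('a)) *\<^sub>R k) ((\<lambda>x. (1/1) *\<^sub>R x + - ((1/1) *\<^sub>R d)) ` cbox a b)"
    by (rule has_integral_affinity[OF assms]) simp
  moreover have "(\<lambda>x. (1/1) *\<^sub>R x + - ((1/1) *\<^sub>R d)) ` cbox a b = cbox (a - d) (b - d)"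
    using cbox_translation[of "-d" a b] by (simp add: add.commute)
  ultimately show ?thesis by simp
qed

lemma tr1: "0 \<le> s \<Longrightarrow> s \<le> 1 \<Longrightarrow> cbox ((\<chi> j. if j = i then s else 0) - s *\<^sub>R axis i 1) (1 - s *\<^sub>R axis i 1) = cbox (0::real^3) 1 \<inter> {x. x \<bullet> axis i 1 \<le> 1 - s}"
  unfolding set_eq_iff mem_box_cart Int_iff mem_Collect_eq inner_axis
  apply (simp add: axis_def)
  apply (smt (verit, best))
  done
lemma tr2: "0 \<le> s \<Longrightarrow> s \<le> 1 \<Longrightarrow> cbox (0 - (s - 1) *\<^sub>R axis i 1) ((\<chi> j. if j = i then s else 1) - (s - 1) *\<^sub>R axis i 1) = cbox (0::real^3) 1 \<inter> {x. x \<bullet> axis i 1 \<ge> 1 - s}"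
  unfolding set_eq_iff mem_box_cart Int_iff mem_Collect_eq inner_axis
  apply (simp add: axis_def)
  apply (smt (verit, best))
  done
lemma set_le: "(c::real) \<le> 1 \<Longrightarrow> cbox (0::real^3) 1 \<inter> {x. x \<bullet> axis i 1 \<le> c} = cbox 0 (\<chi> j. if j = i then c else 1)"
  unfolding set_eq_iff mem_box_cart Int_iff mem_Collect_eq inner_axis
  apply (simp add: axis_def)
  apply (smt (verit, best))
  done
lemma set_ge: "0 \<le> (c::real) \<Longrightarrow> cbox (0::real^3) 1 \<inter> {x. x \<bullet> axis i 1 \<ge> c} = cbox (\<chi> j. if j = i then c else 0) 1"
  unfolding set_eq_iff mem_box_cart Int_iff mem_Collect_eq inner_axis
  apply (simp add: axis_def)
  apply (smt (verit, best))
  done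

lemma ibp1:
  fixes h :: "real^3 \<Rightarrow> real" and i :: 3
  assumes C: "C1 h h'" and per: "\<forall>x. h (x + axis i 1) = h x"
  shows "torus_int (\<lambda>x. h' x (axis i 1)) = 0"
proof -
  define e where "e = (axis i 1 :: real^3)"
  define I where "I s = integral (cbox 0 1) (\<lambda>x. h (x + s *\<^sub>R e))" for s
  have conth: "continuous_on UNIV h" using C1_cont[OF C] .
  have cont_sh: "continuous_on UNIV (\<lambda>x. h (x + d))" for d
    by (rule continuous_on_compose2[OF conth]) (auto intro!: continuous_intros)
  have hi: "((\<lambda>x. h (x + d)) has_integral integral (cbox a b) (\<lambda>x. h (x + d))) (cbox a b)" for a b d
    using integrable_continuous[OF continuous_on_subset[OF cont_sh]] by blast
  have eB: "e \<in> Basis" by (simp add: e_def)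
  have dI: "(I has_field_derivative integral (cbox 0 1) (\<lambda>x. h' (x + 0 *\<^sub>R e) e)) (at 0 within UNIV)"
    unfolding I_def
  proof (rule leibniz_rule_field_derivative[where fx = "\<lambda>s x. h' (x + s *\<^sub>R e) e"])
    fix s x
    show "((\<lambda>s. h (x + s *\<^sub>R e)) has_field_derivative h' (x + s *\<^sub>R e) e) (at s within UNIV)"
      using C1_path[OF C, of x e s] by (simp add: has_real_derivative_iff_has_vector_derivative)
  next
    fix s :: real
    show "(\<lambda>x. h (x + s *\<^sub>R e)) integrable_on cbox 0 1"
      using hi by blast
  next
    show "continuous_on (UNIV \<times> cbox 0 1) (\<lambda>(s, x). h' (x + s *\<^sub>R e) e)"
      unfolding split_beta by (rule continuous_on_compose2[OF C1_cont1[OF C]]) (auto intro!: continuous_intros)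
  qed auto
  have const: "I s = I 0" if "0 \<le> s" "s \<le> 1" for s
  proof -
    define Ja where "Ja = integral (cbox 0 1 \<inter> {x. x \<bullet> e \<le> s}) h"
    define Jb where "Jb = integral (cbox 0 1 \<inter> {x. x \<bullet> e \<ge> s}) h"
    have ha: "(h has_integral Ja) (cbox 0 1 \<inter> {x. x \<bullet> e \<le> s})"
      unfolding Ja_def e_def set_le[OF that(2)] using hi[where d=0] by simp
    have hb: "(h has_integral Jb) (cbox 0 1 \<inter> {x. x \<bullet> e \<ge> s})"
      unfolding Jb_def e_def set_ge[OF that(1)] using hi[where d=0] by simp
    have "(h has_integral (Ja + Jb)) (cbox 0 1)" by (rule has_integral_split[OF ha hb eB])
    then have I0: "I 0 = Ja + Jb" unfolding I_def by (simp add: integral_unique)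
    have t1: "((\<lambda>x. h (x + s *\<^sub>R e)) has_integral Jb) (cbox ((\<chi> j. if j = i then s else 0) - s *\<^sub>R e) (1 - s *\<^sub>R e))"
      by (rule has_integral_transl) (use hb in \<open>simp add: e_def set_ge[OF that(1)]\<close>)
    have e1: "cbox ((\<chi> j. if j = i then s else 0) - s *\<^sub>R e) (1 - s *\<^sub>R e) = cbox 0 1 \<inter> {x. x \<bullet> e \<le> 1 - s}"
      unfolding e_def using that by (rule tr1)
    have b1: "((\<lambda>x. h (x + s *\<^sub>R e)) has_integral Jb) (cbox 0 1 \<inter> {x. x \<bullet> e \<le> 1 - s})" using t1 unfolding e1 .
    have t2: "((\<lambda>x. h (x + (s - 1) *\<^sub>R e)) has_integral Ja) (cbox (0 - (s - 1) *\<^sub>R e) ((\<chi> j. if j = i then s else 1) - (s - 1) *\<^sub>R e))"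
      by (rule has_integral_transl) (use ha in \<open>simp add: e_def set_le[OF that(2)]\<close>)
    have e2: "cbox (0 - (s - 1) *\<^sub>R e) ((\<chi> j. if j = i then s else 1) - (s - 1) *\<^sub>R e) = cbox 0 1 \<inter> {x. x \<bullet> e \<ge> 1 - s}"
      unfolding e_def using that by (rule tr2)
    have f2: "(\<lambda>x. h (x + (s - 1) *\<^sub>R e)) = (\<lambda>x. h (x + s *\<^sub>R e))"
    proof
      fix x show "h (x + (s - 1) *\<^sub>R e) = h (x + s *\<^sub>R e)"
        using per[rule_format, of "x + (s - 1) *\<^sub>R e"] by (simp add: e_def algebra_simps)
    qed
    have b2: "((\<lambda>x. h (x + s *\<^sub>R e)) has_integral Ja) (cbox 0 1 \<inter> {x. x \<bullet> e \<ge> 1 - s})" using t2 unfolding e2 f2 .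
    have "((\<lambda>x. h (x + s *\<^sub>R e)) has_integral (Jb + Ja)) (cbox 0 1)" by (rule has_integral_split[OF b1 b2 eB])
    then have "I s = Jb + Ja" unfolding I_def by (simp add: integral_unique)
    then show ?thesis using I0 by simp
  qed
  have shift: "I (s + 1) = I s" for s
  proof -
    have "h (x + (s + 1) *\<^sub>R e) = h (x + s *\<^sub>R e)" for x
      using per[rule_format, of "x + s *\<^sub>R e"] by (simp add: e_def algebra_simps)
    then show ?thesis unfolding I_def by simp
  qed
  have loc: "I s = I 0" if "s \<in> {-1<..<1}" for s
  proof (cases "0 \<le> s")
    case True then show ?thesis using that by (intro const) auto
  next
    case False
    have "I s = I (s + 1)" using shift[of s] by simp
    also have "\<dots> = I 0" by (rule const) (use that False in auto)
    finally show ?thesis .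
  qed
  have "((\<lambda>s. I 0) has_vector_derivative 0) (at 0)" by (rule has_vector_derivative_const)
  then have d0: "(I has_vector_derivative 0) (at 0)"
  proof (rule has_vector_derivative_transform_within_open[of _ _ _ "{-1<..<1}"])
    fix y :: real assume "y \<in> {-1<..<1}" then show "I 0 = I y" by (metis loc)
  qed auto
  have d1: "(I has_vector_derivative integral (cbox 0 1) (\<lambda>x. h' x e)) (at 0)"
    using dI by (simp add: has_real_derivative_iff_has_vector_derivative)
  show ?thesis using vector_derivative_unique_at[OF d0 d1] by (simp add: torus_int_def e_def)
qed

lemma vec3_eq: "(vector [a, b, c] :: real^3) = a *\<^sub>R axis 1 1 + b *\<^sub>R axis 2 1 + c *\<^sub>R axis 3 1"
  by (simp add: vec_eq_iff axis_def forall_3)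

lemma has_derivative_vector3:
  assumes "(a has_derivative a') F" "(b has_derivative b') F" "(c has_derivative c') F"
  shows "((\<lambda>x. vector [a x, b x, c x] :: real^3) has_derivative (\<lambda>h. vector [a' h, b' h, c' h])) F"
  unfolding vec3_eq by (auto intro!: derivative_eq_intros assms)

lemma has_derivative_nth:
  "(g has_derivative g') F \<Longrightarrow> ((\<lambda>y. g y $ k) has_derivative (\<lambda>h. g' h $ k)) F"
  by (rule bounded_linear.has_derivative[OF bounded_linear_vec_nth])

lemma C1_add: "C1 f f' \<Longrightarrow> C1 g g' \<Longrightarrow> C1 (\<lambda>x. f x + g x) (\<lambda>x w. f' x w + g' x w)"
  unfolding C1_def by (auto intro!: derivative_eq_intros continuous_intros)

lemma C1_diff: "C1 f f' \<Longrightarrow> C1 g g' \<Longrightarrow> C1 (\<lambda>x. f x - g x) (\<lambda>x w. f' x w - g' x w)"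
  unfolding C1_def by (auto intro!: derivative_eq_intros continuous_intros)

lemma C1_const: "C1 (\<lambda>x. c) (\<lambda>x w. 0)"
  unfolding C1_def by (auto intro!: derivative_eq_intros continuous_intros)

lemma C1_mult: fixes f g :: "'a::real_normed_vector \<Rightarrow> real"
  shows "C1 f f' \<Longrightarrow> C1 g g' \<Longrightarrow> C1 (\<lambda>x. f x * g x) (\<lambda>x w. f' x w * g x + f x * g' x w)"
  unfolding C1_def
  apply (auto intro!: derivative_eq_intros continuous_intros
      intro: continuous_at_imp_continuous_on has_derivative_continuous)
  apply (meson continuous_at_imp_continuous_on has_derivative_continuous)+
  done

lemma C1_scaleR: fixes f :: "'a::real_normed_vector \<Rightarrow> real"
  shows "C1 f f' \<Longrightarrow> C1 g g' \<Longrightarrow> C1 (\<lambda>x. f x *\<^sub>R g x) (\<lambda>x w. f' x w *\<^sub>R g x + f x *\<^sub>R g' x w)"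
  unfolding C1_def
  apply (auto intro!: derivative_eq_intros continuous_intros)
  apply (meson continuous_at_imp_continuous_on has_derivative_continuous)+
  done

lemma C1_inner: fixes f :: "'a::real_normed_vector \<Rightarrow> 'b::real_inner"
  shows "C1 f f' \<Longrightarrow> C1 g g' \<Longrightarrow> C1 (\<lambda>x. f x \<bullet> g x) (\<lambda>x w. f' x w \<bullet> g x + f x \<bullet> g' x w)"
  unfolding C1_def
  apply (auto intro!: derivative_eq_intros continuous_intros)
  apply (meson continuous_at_imp_continuous_on has_derivative_continuous)+
  done

lemma C1_nth: "C1 f f' \<Longrightarrow> C1 (\<lambda>x. f x $ k) (\<lambda>x w. f' x w $ k)"
  unfolding C1_def by (auto intro!: has_derivative_nth continuous_intros)

lemma C1_vector3: "C1 a a' \<Longrightarrow> C1 b b' \<Longrightarrow> C1 c c' \<Longrightarrow>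
   C1 (\<lambda>x. vector [a x, b x, c x] :: real^3) (\<lambda>x w. vector [a' x w, b' x w, c' x w])"
  unfolding C1_def vec3_eq by (auto intro!: derivative_eq_intros continuous_intros)

lemma C1_cross: "C1 f f' \<Longrightarrow> C1 g g' \<Longrightarrow> C1 (\<lambda>x. cross3 (f x) (g x)) (\<lambda>x w. cross3 (f' x w) (g x) + cross3 (f x) (g' x w))"
proof -
  assume a: "C1 f f'" "C1 g g'"
  have "C1 (\<lambda>x. vector [f x $ 2 * g x $ 3 - f x $ 3 * g x $ 2, f x $ 3 * g x $ 1 - f x $ 1 * g x $ 3, f x $ 1 * g x $ 2 - f x $ 2 * g x $ 1] :: real^3)
     (\<lambda>x w. vector [(f' x w $ 2 * g x $ 3 + f x $ 2 * g' x w $ 3) - (f' x w $ 3 * g x $ 2 + f x $ 3 * g' x w $ 2),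
                    (f' x w $ 3 * g x $ 1 + f x $ 3 * g' x w $ 1) - (f' x w $ 1 * g x $ 3 + f x $ 1 * g' x w $ 3),
                    (f' x w $ 1 * g x $ 2 + f x $ 1 * g' x w $ 2) - (f' x w $ 2 * g x $ 1 + f x $ 2 * g' x w $ 1)])"
    by (intro C1_vector3 C1_diff C1_mult C1_nth a)
  moreover have "(\<lambda>x. cross3 (f x) (g x)) = (\<lambda>x. vector [f x $ 2 * g x $ 3 - f x $ 3 * g x $ 2, f x $ 3 * g x $ 1 - f x $ 1 * g x $ 3, f x $ 1 * g x $ 2 - f x $ 2 * g x $ 1])"
    by (simp add: cross3_def)
  moreover have "(\<lambda>x w. cross3 (f' x w) (g x) + cross3 (f x) (g' x w)) = (\<lambda>x w. vector [(f' x w $ 2 * g x $ 3 + f x $ 2 * g' x w $ 3) - (f' x w $ 3 * g x $ 2 + f x $ 3 * g' x w $ 2),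
                    (f' x w $ 3 * g x $ 1 + f x $ 3 * g' x w $ 1) - (f' x w $ 1 * g x $ 3 + f x $ 1 * g' x w $ 3),
                    (f' x w $ 1 * g x $ 2 + f x $ 1 * g' x w $ 2) - (f' x w $ 2 * g x $ 1 + f x $ 2 * g' x w $ 1)])"
    by (simp add: cross3_def fun_eq_iff vec_eq_iff forall_3 algebra_simps)
  ultimately show ?thesis by simp
qed

lemma pd_deriv: "(g has_derivative g') (at x) \<Longrightarrow> pd i g x = g' (axis i 1)"
proof -
  assume d: "(g has_derivative g') (at x)"
  have "((\<lambda>s. x + s *\<^sub>R axis i 1) has_derivative (\<lambda>h. h *\<^sub>R axis i 1)) (at 0)"
    by (auto intro!: derivative_eq_intros)
  from diff_chain_at[OF this] d
  have "((\<lambda>s. g (x + s *\<^sub>R axis i 1)) has_derivative (\<lambda>h. g' (h *\<^sub>R axis i 1))) (at 0)"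
    by (simp add: o_def)
  moreover have "(\<lambda>h. g' (h *\<^sub>R axis i 1)) = (\<lambda>h. h *\<^sub>R g' (axis i 1))"
    using has_derivative_linear[OF d] by (simp add: linear_cmul)
  ultimately show ?thesis
    unfolding pd_def by (simp add: has_vector_derivative_def vector_derivative_at)
qed

lemma pd_nth: "(g has_derivative g') (at x) \<Longrightarrow> pd i (\<lambda>y. g y $ k) x = g' (axis i 1) $ k"
  using pd_deriv[OF has_derivative_nth] by blast

definition curlV :: "(3 \<Rightarrow> real^3) \<Rightarrow> real^3" where
  "curlV d = vector [d 2 $ 3 - d 3 $ 2, d 3 $ 1 - d 1 $ 3, d 1 $ 2 - d 2 $ 1]"

lemma curl_deriv: "(g has_derivative g') (at x) \<Longrightarrow> curl g x = curlV (\<lambda>j. g' (axis j 1))"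
  by (simp add: curl_def curlV_def pd_nth)

lemma grad_deriv: "(g has_derivative g') (at x) \<Longrightarrow> grad g x = (\<chi> j. g' (axis j 1))"
  by (simp add: grad_def pd_deriv)

lemma divg_deriv: "(g has_derivative g') (at x) \<Longrightarrow> divg g x = (\<Sum>j\<in>UNIV. g' (axis j 1) $ j)"
  by (simp add: divg_def pd_nth)

lemma adv_deriv: "(g has_derivative g') (at x) \<Longrightarrow> adv v g x = (\<Sum>j\<in>UNIV. (v $ j) *\<^sub>R g' (axis j 1))"
  by (simp add: adv_def pd_deriv)

lemma dt_deriv: "(g has_vector_derivative d) (at t) \<Longrightarrow> dt g t = d"
  by (simp add: dt_def vector_derivative_at)

lemma cont_curlV[continuous_intros]:
  "(\<And>j. continuous_on S (\<lambda>x. d x j)) \<Longrightarrow> continuous_on S (\<lambda>x. curlV (d x))"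
  unfolding curlV_def vec3_eq by (intro continuous_intros) auto

lemma int_UNIV: fixes f :: "'a::euclidean_space \<Rightarrow> 'b::banach"
  shows "continuous_on UNIV f \<Longrightarrow> f integrable_on cbox a b"
  by (rule integrable_continuous, erule continuous_on_subset) simp

lemma ibp_div:
  fixes V :: "real^3 \<Rightarrow> real^3"
  assumes C: "C1 V V'" and per: "\<forall>x j. V (x + axis j 1) = V x"
  shows "torus_int (\<lambda>x. \<Sum>j\<in>UNIV. V' x (axis j 1) $ j) = 0"
proof -
  have z: "integral (cbox 0 1) (\<lambda>x. V' x (axis j 1) $ j) = 0" for j
    using ibp1[OF C1_nth[OF C], of j k for k] per unfolding torus_int_def by simp
  have int: "(\<lambda>x. V' x (axis j 1) $ j) integrable_on cbox 0 1" for j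
    by (rule int_UNIV[OF C1_cont1[OF C1_nth[OF C]]])
  show ?thesis unfolding torus_int_def by (subst integral_sum) (auto simp: int z)
qed

lemma curl_identity:
  "(\<Sum>j\<in>UNIV. (cross3 (b j) a + cross3 bb (aa j)) $ j) = a \<bullet> curlV b - bb \<bullet> curlV aa"
  by (simp add: sum_3 cross3_def curlV_def inner_vec_def algebra_simps)

lemma ibp_curl:
  fixes A B :: "real^3 \<Rightarrow> real^3"
  assumes CA: "C1 A A'" and CB: "C1 B B'"
    and pA: "\<forall>x j. A (x + axis j 1) = A x" and pB: "\<forall>x j. B (x + axis j 1) = B x"
  shows "torus_int (\<lambda>x. A x \<bullet> curlV (\<lambda>j. B' x (axis j 1))) = torus_int (\<lambda>x. B x \<bullet> curlV (\<lambda>j. A' x (axis j 1)))"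
proof -
  have CV: "C1 (\<lambda>x. cross3 (B x) (A x)) (\<lambda>x w. cross3 (B' x w) (A x) + cross3 (B x) (A' x w))"
    by (rule C1_cross[OF CB CA])
  have "torus_int (\<lambda>x. \<Sum>j\<in>UNIV. (cross3 (B' x (axis j 1)) (A x) + cross3 (B x) (A' x (axis j 1))) $ j) = 0"
    by (rule ibp_div[OF CV]) (use pA pB in simp)
  then have "torus_int (\<lambda>x. A x \<bullet> curlV (\<lambda>j. B' x (axis j 1)) - B x \<bullet> curlV (\<lambda>j. A' x (axis j 1))) = 0"
    by (simp only: curl_identity)
  moreover have "(\<lambda>x. A x \<bullet> curlV (\<lambda>j. B' x (axis j 1))) integrable_on cbox 0 1"
    by (intro int_UNIV continuous_intros C1_cont[OF CA] C1_cont1[OF CB])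
  moreover have "(\<lambda>x. B x \<bullet> curlV (\<lambda>j. A' x (axis j 1))) integrable_on cbox 0 1"
    by (intro int_UNIV continuous_intros C1_cont[OF CB] C1_cont1[OF CA])
  ultimately show ?thesis unfolding torus_int_def by (simp add: integral_diff)
qed

declare iter_dd.simps[simp del]

type_synonym Z = "(real^3) \<times> (real^3) \<times> real"

definition E :: "3 \<Rightarrow> Z" where "E j = (0, axis j 1, 0)"
definition X :: "3 \<Rightarrow> Z" where "X j = (axis j 1, 0, 0)"
definition Tv :: Z where "Tv = (0, 0, 1)"
definition curlZ :: "(Z \<Rightarrow> real^3) \<Rightarrow> Z \<Rightarrow> real^3" where
  "curlZ H z = curlV (\<lambda>j. iter_dd [E j] H z)"

lemma bl2: "bounded_linear (\<lambda>y::real^3. (0::real^3, y, 0::real))"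
  by (intro bounded_linear_Pair bounded_linear_zero bounded_linear_ident)
lemma bl1: "bounded_linear (\<lambda>y::real^3. (y, 0::real^3, 0::real))"
  by (intro bounded_linear_Pair bounded_linear_zero bounded_linear_ident)
lemma blU: "bounded_linear (\<lambda>y::real^3. (y, 0::real))"
  by (intro bounded_linear_Pair bounded_linear_zero bounded_linear_ident)

lemma slice2_C1: "C1 (H :: Z \<Rightarrow> 'b::real_normed_vector) H' \<Longrightarrow> C1 (\<lambda>y. H (x1, y, t)) (\<lambda>y v. H' (x1, y, t) (0, v, 0))"
  using C1_slice[OF _ bl2, of H H' "(x1, 0, t)"] by simp

lemma slice1_C1: "C1 (H :: Z \<Rightarrow> 'b::real_normed_vector) H' \<Longrightarrow> C1 (\<lambda>y. H (y, x2, t)) (\<lambda>y v. H' (y, x2, t) (v, 0, 0))"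
  using C1_slice[OF _ bl1, of H H' "(0, x2, t)"] by simp

lemma sliceU_C1: "C1 (H :: (real^3) \<times> real \<Rightarrow> 'b::real_normed_vector) H' \<Longrightarrow> C1 (\<lambda>y. H (y, t)) (\<lambda>y v. H' (y, t) (v, 0))"
  using C1_slice[OF _ blU, of H H' "(0, t)"] by simp

lemma time_path: "C1 (H :: Z \<Rightarrow> 'b::real_normed_vector) H' \<Longrightarrow> ((\<lambda>s. H (x1, x2, s)) has_vector_derivative H' (x1, x2, s) Tv) (at s)"
  using C1_path[of H H' "(x1, x2, 0)" Tv s] by (simp add: Tv_def)

lemma swap_dd: "smooth_map (H :: 'a::euclidean_space \<Rightarrow> 'b::banach) \<Longrightarrow> iter_dd [a] (iter_dd [b] H) z = iter_dd [b] (iter_dd [a] H) z"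
  using clairaut[of H a b z] by (simp add: iter_dd_append)

lemma curlZ_eq: "curlZ H = (\<lambda>z. vector [iter_dd [E 2] H z $ 3 - iter_dd [E 3] H z $ 2,
   iter_dd [E 3] H z $ 1 - iter_dd [E 1] H z $ 3, iter_dd [E 1] H z $ 2 - iter_dd [E 2] H z $ 1])"
  by (simp add: curlZ_def curlV_def fun_eq_iff)

lemma C1_curlZ:
  assumes sm: "smooth_map H"
  shows "C1 (curlZ H) (\<lambda>z w. curlZ (iter_dd [w] H) z)"
proof -
  have c: "C1 (iter_dd [E j] H) (\<lambda>z w. iter_dd [w] (iter_dd [E j] H) z)" for j
    using smooth_C1[OF smooth_iter[OF sm, of "[E j]"]] .
  have "C1 (curlZ H) (\<lambda>z w. vector [iter_dd [w] (iter_dd [E 2] H) z $ 3 - iter_dd [w] (iter_dd [E 3] H) z $ 2,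
   iter_dd [w] (iter_dd [E 3] H) z $ 1 - iter_dd [w] (iter_dd [E 1] H) z $ 3,
   iter_dd [w] (iter_dd [E 1] H) z $ 2 - iter_dd [w] (iter_dd [E 2] H) z $ 1])"
    unfolding curlZ_eq by (intro C1_vector3 C1_diff C1_nth c)
  then show ?thesis
    by (simp add: curlZ_eq swap_dd[OF sm])
qed

lemma C1_G:
  assumes sm: "smooth_map F"
  shows "C1 (\<lambda>z. F z \<bullet> curlZ F z) (\<lambda>z w. iter_dd [w] F z \<bullet> curlZ F z + F z \<bullet> curlZ (iter_dd [w] F) z)"
  by (rule C1_inner[OF smooth_C1[OF sm] C1_curlZ[OF sm]])

lemma curlZ_per: "smooth_map H \<Longrightarrow> \<forall>z. H (z + a) = H z \<Longrightarrow> curlZ H (z + a) = curlZ H z"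
  by (simp add: curlZ_def smooth_per)

lemma curl_slice: "smooth_map H \<Longrightarrow> curl (\<lambda>y. H (x1, y, t)) x2 = curlZ H (x1, x2, t)"
  using curl_deriv[OF C1_deriv[OF slice2_C1[OF smooth_C1]]] by (simp add: curlZ_def E_def)

lemma dt_slice: "smooth_map H \<Longrightarrow> dt (\<lambda>s. H (x1, x2, s)) t = iter_dd [Tv] H (x1, x2, t)"
  using dt_deriv[OF time_path[OF smooth_C1]] by blast

lemma adv_slice: "smooth_map H \<Longrightarrow> adv v (\<lambda>y. H (y, x2, t)) x1 = (\<Sum>j\<in>UNIV. (v $ j) *\<^sub>R iter_dd [X j] H (x1, x2, t))"
  using adv_deriv[OF C1_deriv[OF slice1_C1[OF smooth_C1]]] by (simp add: X_def)

lemma grad_slice: "smooth_map (Q :: Z \<Rightarrow> real) \<Longrightarrow> grad (\<lambda>y. Q (x1, y, t)) x2 = (\<chi> j. iter_dd [E j] Q (x1, x2, t))"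
  using grad_deriv[OF C1_deriv[OF slice2_C1[OF smooth_C1]]] by (simp add: E_def)

lemma divg_slice: "smooth_map (W :: (real^3) \<times> real \<Rightarrow> real^3) \<Longrightarrow>
    divg (\<lambda>y. W (y, t)) x1 = (\<Sum>j\<in>UNIV. iter_dd [(axis j 1, 0)] W (x1, t) $ j)"
  using divg_deriv[OF C1_deriv[OF sliceU_C1[OF smooth_C1]]] by simp

lemma cont_slice2: "continuous_on UNIV (H :: Z \<Rightarrow> 'b::topological_space) \<Longrightarrow> continuous_on UNIV (\<lambda>y. H (x1, y, t))"
  by (rule continuous_on_compose2[of UNIV H]) (auto intro!: continuous_intros)
lemma cont_slice1: "continuous_on UNIV (H :: Z \<Rightarrow> 'b::topological_space) \<Longrightarrow> continuous_on UNIV (\<lambda>y. H (y, x2, t))"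
  by (rule continuous_on_compose2[of UNIV H]) (auto intro!: continuous_intros)
lemma cont_pair: "continuous_on UNIV (H :: Z \<Rightarrow> 'b::topological_space) \<Longrightarrow> continuous_on S (\<lambda>p. H (fst p, snd p, t))"
  by (rule continuous_on_compose2[of UNIV H]) (auto intro!: continuous_intros)

lemma cont_curlZ: "smooth_map H \<Longrightarrow> continuous_on UNIV (curlZ H)"
  using C1_cont[OF C1_curlZ] by blast

lemma E_fold: "(0, axis j 1, 0) = E j" by (simp add: E_def)
lemma X_fold: "(axis j 1, 0, 0) = X j" by (simp add: X_def)

lemma divcurl: "smooth_map (H :: Z \<Rightarrow> real^3) \<Longrightarrow> (\<Sum>j\<in>UNIV. curlZ (iter_dd [E j] H) z $ j) = 0"
  using swap_dd[of H "E 1" "E 2" z] swap_dd[of H "E 1" "E 3" z] swap_dd[of H "E 2" "E 3" z]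
  by (simp add: sum_3 curlZ_eq)

lemma int_slice2: "continuous_on UNIV (H :: Z \<Rightarrow> 'b::banach) \<Longrightarrow> (\<lambda>x2. H (x1, x2, t)) integrable_on cbox a b"
  by (rule int_UNIV[OF cont_slice2])

lemma nest: fixes f :: "(real^3) \<times> (real^3) \<Rightarrow> real"
  assumes "continuous_on UNIV f"
  shows "torus_int (\<lambda>x1. torus_int (\<lambda>x2. f (x1, x2))) = integral (cbox (0,0) (1,1)) f"
  unfolding torus_int_def
  by (rule integral_prod_continuous[symmetric]) (rule continuous_on_subset[OF assms], simp)

theorem mainTheorem2:
  fixes u1 m1 :: "real^3 \<Rightarrow> real \<Rightarrow> real^3"
    and u2 m2 :: "real^3 \<Rightarrow> real^3 \<Rightarrow> real \<Rightarrow> real^3"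
    and p1 :: "real^3 \<Rightarrow> real \<Rightarrow> real"
    and p2 :: "real^3 \<Rightarrow> real^3 \<Rightarrow> real \<Rightarrow> real"
  assumes sm_u1: "smooth_map (\<lambda>(x1, t). u1 x1 t)"
    and sm_m1: "smooth_map (\<lambda>(x1, t). m1 x1 t)"
    and sm_p1: "smooth_map (\<lambda>(x1, t). p1 x1 t)"
    and sm_u2: "smooth_map (\<lambda>(x1, x2, t). u2 x1 x2 t)"
    and sm_m2: "smooth_map (\<lambda>(x1, x2, t). m2 x1 x2 t)"
    and sm_p2: "smooth_map (\<lambda>(x1, x2, t). p2 x1 x2 t)"
    and per_u1: "\<forall>t. periodic3 (\<lambda>x1. u1 x1 t)"
    and per_m1: "\<forall>t. periodic3 (\<lambda>x1. m1 x1 t)"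
    and per_p1: "\<forall>t. periodic3 (\<lambda>x1. p1 x1 t)"
    and per_u2: "\<forall>x2 t. periodic3 (\<lambda>x1. u2 x1 x2 t)" "\<forall>x1 t. periodic3 (\<lambda>x2. u2 x1 x2 t)"
    and per_m2: "\<forall>x2 t. periodic3 (\<lambda>x1. m2 x1 x2 t)" "\<forall>x1 t. periodic3 (\<lambda>x2. m2 x1 x2 t)"
    and per_p2: "\<forall>x2 t. periodic3 (\<lambda>x1. p2 x1 x2 t)" "\<forall>x1 t. periodic3 (\<lambda>x2. p2 x1 x2 t)"
    and div_u1: "\<forall>x1 t. divg (\<lambda>y. u1 y t) x1 = 0"
    and div_u2: "\<forall>x1 x2 t. divg (\<lambda>y. u2 x1 y t) x2 = 0"
    and eq1: "\<forall>x1 t. dt (m1 x1) t + adv (u1 x1 t) (\<lambda>y. m1 y t) x1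
                 + gradT (\<lambda>y. u1 y t) (m1 x1 t) x1
                 + torus_int (\<lambda>x2. gradT (\<lambda>y. u2 y x2 t) (m2 x1 x2 t) x1)
               = - grad (\<lambda>y. p1 y t) x1"
    and eq2: "\<forall>x1 x2 t. dt (m2 x1 x2) t + adv (u1 x1 t) (\<lambda>y. m2 y x2 t) x1
                 - cross3 (u2 x1 x2 t) (curl (\<lambda>y. m2 x1 y t) x2)
               = - grad (\<lambda>y. p2 x1 y t) x2"
  shows "((\<lambda>t. torus_int (\<lambda>x1. torus_int (\<lambda>x2. m2 x1 x2 t \<bullet> curl (\<lambda>y. m2 x1 y t) x2)))
            has_real_derivative 0) (at t)"
proof -
  define F where "F = (\<lambda>(x1, x2, t). m2 x1 x2 t)"
  define P where "P = (\<lambda>(x1, x2, t). p2 x1 x2 t)"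
  define U where "U = (\<lambda>(x1, t). u1 x1 t)"
  have smF: "smooth_map F" using sm_m2 by (simp add: F_def)
  have smP: "smooth_map P" using sm_p2 by (simp add: P_def)
  have smU: "smooth_map U" using sm_u1 by (simp add: U_def)
  have Fe2: "m2 a b = (\<lambda>s. F (a, b, s))" for a b by (simp add: F_def)
  have Pe2: "p2 a b = (\<lambda>s. P (a, b, s))" for a b by (simp add: P_def)
  have Ue2: "u1 a = (\<lambda>s. U (a, s))" for a by (simp add: U_def)
  have perF2: "F (z + (0, axis j 1, 0)) = F z" for z j
    using per_m2(2) by (cases z) (simp add: F_def periodic3_def)
  have perF1: "F (z + (axis j 1, 0, 0)) = F z" for z j
    using per_m2(1) by (cases z) (simp add: F_def periodic3_def)
  have perP2: "P (z + (0, axis j 1, 0)) = P z" for z j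
    using per_p2(2) by (cases z) (simp add: P_def periodic3_def)
  have perU: "U (z + (axis j 1, 0)) = U z" for z j
    using per_u1 by (cases z) (simp add: U_def periodic3_def)
  define G where "G z = F z \<bullet> curlZ F z" for z
  define G' where "G' z w = iter_dd [w] F z \<bullet> curlZ F z + F z \<bullet> curlZ (iter_dd [w] F) z" for z w
  have CG: "C1 G G'" unfolding G_def[abs_def] G'_def[abs_def] by (rule C1_G[OF smF])
  have cF: "continuous_on UNIV F" by (rule smooth_cont[OF smF])
  have ciF: "continuous_on UNIV (iter_dd ws F)" for ws by (rule smooth_cont[OF smooth_iter[OF smF]])
  have ciP: "continuous_on UNIV (iter_dd ws P)" for ws by (rule smooth_cont[OF smooth_iter[OF smP]])
  have cP: "continuous_on UNIV P" by (rule smooth_cont[OF smP])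
  have cU: "continuous_on UNIV U" by (rule smooth_cont[OF smU])
  have cw: "continuous_on UNIV (curlZ (iter_dd ws F))" for ws by (rule cont_curlZ[OF smooth_iter[OF smF]])
  have cwF: "continuous_on UNIV (curlZ F)" by (rule cont_curlZ[OF smF])
  have cG: "continuous_on UNIV G" by (rule C1_cont[OF CG])
  have cG': "continuous_on UNIV (\<lambda>z. G' z w)" for w by (rule C1_cont1[OF CG])
  define Q where "Q x1 x2 = G' (x1, x2, t) Tv" for x1 x2
  define R where "R x1 x2 = (\<Sum>i\<in>UNIV. U (x1, t) $ i * G' (x1, x2, t) (X i))" for x1 x2

  have Tform: "(\<lambda>t. torus_int (\<lambda>x1. torus_int (\<lambda>x2. m2 x1 x2 t \<bullet> curl (\<lambda>y. m2 x1 y t) x2)))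
      = (\<lambda>s. torus_int (\<lambda>x1. torus_int (\<lambda>x2. G (x1, x2, s))))"
    by (simp add: Fe2 curl_slice[OF smF] G_def)

  have TD: "((\<lambda>s. torus_int (\<lambda>x1. torus_int (\<lambda>x2. G (x1, x2, s)))) has_real_derivative
      torus_int (\<lambda>x1. torus_int (\<lambda>x2. Q x1 x2))) (at t)"
  proof -
    have "(\<lambda>s. torus_int (\<lambda>x1. torus_int (\<lambda>x2. G (x1, x2, s)))) = (\<lambda>s. integral (cbox (0,0) (1,1)) (\<lambda>p. G (fst p, snd p, s)))"
      using nest[OF cont_pair[OF cG]] by simp
    moreover have "((\<lambda>s. integral (cbox (0,0) (1,1)) (\<lambda>p. G (fst p, snd p, s))) has_field_derivative
        integral (cbox (0,0) (1,1)) (\<lambda>p. G' (fst p, snd p, t) Tv)) (at t within UNIV)"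
    proof (rule leibniz_rule_field_derivative[where fx="\<lambda>s p. G' (fst p, snd p, s) Tv"])
      fix s :: real and p :: "(real^3) \<times> (real^3)"
      show "((\<lambda>s. G (fst p, snd p, s)) has_field_derivative G' (fst p, snd p, s) Tv) (at s within UNIV)"
        using time_path[OF CG] by (simp add: has_real_derivative_iff_has_vector_derivative)
    next
      fix s :: real
      show "(\<lambda>p. G (fst p, snd p, s)) integrable_on cbox (0, 0) (1, 1)"
        by (rule int_UNIV[OF cont_pair[OF cG]])
    next
      show "continuous_on (UNIV \<times> cbox (0, 0) (1, 1)) (\<lambda>(s, p). G' (fst p, snd p, s) Tv)"
        unfolding split_beta by (rule continuous_on_compose2[OF cG']) (auto intro!: continuous_intros)
    qed auto
    moreover have "integral (cbox (0,0) (1,1)) (\<lambda>p. G' (fst p, snd p, t) Tv) = torus_int (\<lambda>x1. torus_int (\<lambda>x2. Q x1 x2))"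
      using nest[OF cont_pair[OF cG']] by (simp add: Q_def)
    ultimately show ?thesis by simp
  qed

  have key: "torus_int (\<lambda>x1. torus_int (\<lambda>x2. Q x1 x2)) = 0"
  proof -
    define Ft where "Ft = iter_dd [Tv] F"
    define K where "K i = iter_dd [X i] F" for i
    define Pg where "Pg z = (\<chi> j. iter_dd [E j] P z)" for z
    have smFt: "smooth_map Ft" unfolding Ft_def by (rule smooth_iter[OF smF])
    have smK: "smooth_map (K i)" for i unfolding K_def by (rule smooth_iter[OF smF])
    have iF0: "iter_dd [] F = F" by (simp add: iter_dd.simps)
    have pF2: "iter_dd ws F (x1, y + axis j 1, s) = iter_dd ws F (x1, y, s)" for ws x1 y s j
    proof -
      have "iter_dd ws F ((x1, y, s) + (0, axis j 1, 0)) = iter_dd ws F (x1, y, s)"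
        by (rule smooth_per[OF smF]) (use perF2 in blast)
      then show ?thesis by simp
    qed
    have pF1: "iter_dd ws F (y + axis j 1, x2, s) = iter_dd ws F (y, x2, s)" for ws x2 y s j
    proof -
      have "iter_dd ws F ((y, x2, s) + (axis j 1, 0, 0)) = iter_dd ws F (y, x2, s)"
        by (rule smooth_per[OF smF]) (use perF1 in blast)
      then show ?thesis by simp
    qed
    have pC2: "curlZ (iter_dd ws F) (x1, y + axis j 1, s) = curlZ (iter_dd ws F) (x1, y, s)" for ws x1 y s j
      by (simp add: curlZ_def iter_dd_append pF2)
    have pC1: "curlZ (iter_dd ws F) (y + axis j 1, x2, s) = curlZ (iter_dd ws F) (y, x2, s)" for ws x2 y s j
      by (simp add: curlZ_def iter_dd_append pF1)
    have pF2': "F (x1, y + axis j 1, s) = F (x1, y, s)" for x1 y s j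
      using pF2[of "[]"] by (simp add: iF0)
    have pF1': "F (y + axis j 1, x2, s) = F (y, x2, s)" for x2 y s j
      using pF1[of "[]"] by (simp add: iF0)
    have pCF2: "curlZ F (x1, y + axis j 1, s) = curlZ F (x1, y, s)" for x1 y s j
      using pC2[of "[]"] by (simp add: iF0)
    have pCF1: "curlZ F (y + axis j 1, x2, s) = curlZ F (y, x2, s)" for x2 y s j
      using pC1[of "[]"] by (simp add: iF0)
    have pP2: "P (x1, y + axis j 1, s) = P (x1, y, s)" for x1 y s j
      using perP2[of "(x1, y, s)" j] by simp
    have curlZ_fold: "curlV (\<lambda>j. iter_dd [(0, axis j 1, 0)] H z) = curlZ H z" for H z
      by (simp add: curlZ_def E_def)
    have cFt: "continuous_on UNIV Ft" unfolding Ft_def by (rule ciF)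
    have cK: "continuous_on UNIV (K i)" for i unfolding K_def by (rule ciF)
    have cwFt: "continuous_on UNIV (curlZ Ft)" unfolding Ft_def by (rule cw)
    have cwK: "continuous_on UNIV (curlZ (K i))" for i unfolding K_def by (rule cw)

    have eqp: "Ft (x1, x2, t) = - (\<Sum>j\<in>UNIV. U (x1, t) $ j *\<^sub>R K j (x1, x2, t))
        + cross3 (u2 x1 x2 t) (curlZ F (x1, x2, t)) - Pg (x1, x2, t)" for x1 x2
    proof -
      have "Ft (x1, x2, t) + (\<Sum>j\<in>UNIV. U (x1, t) $ j *\<^sub>R K j (x1, x2, t))
          - cross3 (u2 x1 x2 t) (curlZ F (x1, x2, t)) = - Pg (x1, x2, t)"
        using eq2[rule_format, of x1 x2 t]
        by (simp add: Fe2 Pe2 Ue2 dt_slice[OF smF] adv_slice[OF smF] curl_slice[OF smF] grad_slice[OF smP]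
            Ft_def K_def Pg_def)
      then show ?thesis by (simp add: algebra_simps)
    qed
    have Ftw: "Ft (x1, x2, t) \<bullet> curlZ F (x1, x2, t) =
        - (\<Sum>j\<in>UNIV. U (x1, t) $ j * (K j (x1, x2, t) \<bullet> curlZ F (x1, x2, t)))
        - Pg (x1, x2, t) \<bullet> curlZ F (x1, x2, t)" for x1 x2
      unfolding eqp[of x1 x2]
      by (simp add: inner_diff_left inner_add_left inner_sum_left dot_cross_self)

    \<comment> \<open>integration by parts in x2 for the time derivative term\<close>
    have A1: "torus_int (\<lambda>x2. F (x1, x2, t) \<bullet> curlZ Ft (x1, x2, t)) = torus_int (\<lambda>x2. Ft (x1, x2, t) \<bullet> curlZ F (x1, x2, t))" for x1
      using ibp_curl[OF slice2_C1[OF smooth_C1[OF smF]] slice2_C1[OF smooth_C1[OF smFt]], of x1 t x1 t]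
      by (simp add: curlZ_fold pF2' Ft_def pF2)
    have QA: "torus_int (\<lambda>x2. Q x1 x2) = 2 * torus_int (\<lambda>x2. Ft (x1, x2, t) \<bullet> curlZ F (x1, x2, t))" for x1
    proof -
      have "torus_int (\<lambda>x2. Q x1 x2) = torus_int (\<lambda>x2. Ft (x1, x2, t) \<bullet> curlZ F (x1, x2, t) + F (x1, x2, t) \<bullet> curlZ Ft (x1, x2, t))"
        by (simp add: Q_def G'_def Ft_def)
      also have "\<dots> = torus_int (\<lambda>x2. Ft (x1, x2, t) \<bullet> curlZ F (x1, x2, t)) + torus_int (\<lambda>x2. F (x1, x2, t) \<bullet> curlZ Ft (x1, x2, t))"
        unfolding torus_int_def
        by (rule integral_add; rule int_slice2[of "\<lambda>z. _ z \<bullet> _ z"]; intro continuous_intros cFt cwF cF cwFt)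
      finally show ?thesis using A1[of x1] by simp
    qed

    have PA: "torus_int (\<lambda>x2. Pg (x1, x2, t) \<bullet> curlZ F (x1, x2, t)) = 0" for x1
    proof -
      have CV: "C1 (\<lambda>y. P (x1, y, t) *\<^sub>R curlZ F (x1, y, t))
          (\<lambda>y w. iter_dd [(0, w, 0)] P (x1, y, t) *\<^sub>R curlZ F (x1, y, t) + P (x1, y, t) *\<^sub>R curlZ (iter_dd [(0, w, 0)] F) (x1, y, t))"
        by (rule C1_scaleR[OF slice2_C1[OF smooth_C1[OF smP]] slice2_C1[OF C1_curlZ[OF smF]]])
      have "torus_int (\<lambda>x. \<Sum>j\<in>UNIV. (iter_dd [(0, axis j 1, 0)] P (x1, x, t) *\<^sub>R curlZ F (x1, x, t)
           + P (x1, x, t) *\<^sub>R curlZ (iter_dd [(0, axis j 1, 0)] F) (x1, x, t)) $ j) = 0"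
        by (rule ibp_div[OF CV]) (simp add: pP2 pCF2)
      moreover have "(\<Sum>j\<in>UNIV. (iter_dd [(0, axis j 1, 0)] P (x1, x, t) *\<^sub>R curlZ F (x1, x, t)
           + P (x1, x, t) *\<^sub>R curlZ (iter_dd [(0, axis j 1, 0)] F) (x1, x, t)) $ j) = Pg (x1, x, t) \<bullet> curlZ F (x1, x, t)" for x
      proof -
        have "(\<Sum>j\<in>UNIV. (iter_dd [(0, axis j 1, 0)] P (x1, x, t) *\<^sub>R curlZ F (x1, x, t)
           + P (x1, x, t) *\<^sub>R curlZ (iter_dd [(0, axis j 1, 0)] F) (x1, x, t)) $ j)
          = (\<Sum>j\<in>UNIV. iter_dd [E j] P (x1, x, t) * curlZ F (x1, x, t) $ j)
            + P (x1, x, t) * (\<Sum>j\<in>UNIV. curlZ (iter_dd [E j] F) (x1, x, t) $ j)"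
          by (simp add: E_fold sum.distrib sum_distrib_left)
        also have "\<dots> = Pg (x1, x, t) \<bullet> curlZ F (x1, x, t)"
          by (simp add: divcurl[OF smF] Pg_def inner_vec_def)
        finally show ?thesis .
      qed
      ultimately show ?thesis by simp
    qed

    have KA: "torus_int (\<lambda>x2. G' (x1, x2, t) (X i)) = 2 * torus_int (\<lambda>x2. K i (x1, x2, t) \<bullet> curlZ F (x1, x2, t))" for x1 i
    proof -
      have ib: "torus_int (\<lambda>x2. K i (x1, x2, t) \<bullet> curlZ F (x1, x2, t)) = torus_int (\<lambda>x2. F (x1, x2, t) \<bullet> curlZ (K i) (x1, x2, t))"
        using ibp_curl[OF slice2_C1[OF smooth_C1[OF smK[of i]]] slice2_C1[OF smooth_C1[OF smF]], of x1 t x1 t]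
        by (simp add: curlZ_fold pF2' K_def pF2)
      have "torus_int (\<lambda>x2. G' (x1, x2, t) (X i)) = torus_int (\<lambda>x2. K i (x1, x2, t) \<bullet> curlZ F (x1, x2, t) + F (x1, x2, t) \<bullet> curlZ (K i) (x1, x2, t))"
        by (simp add: G'_def K_def)
      also have "\<dots> = torus_int (\<lambda>x2. K i (x1, x2, t) \<bullet> curlZ F (x1, x2, t)) + torus_int (\<lambda>x2. F (x1, x2, t) \<bullet> curlZ (K i) (x1, x2, t))"
        unfolding torus_int_def
        by (rule integral_add; rule int_slice2[of "\<lambda>z. _ z \<bullet> _ z"]; intro continuous_intros cK cwF cF cwK)
      finally show ?thesis using ib by simp
    qed

    have inner: "torus_int (\<lambda>x2. Q x1 x2) = - torus_int (\<lambda>x2. R x1 x2)" for x1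
    proof -
      have i1: "(\<lambda>x2. K j (x1, x2, t) \<bullet> curlZ F (x1, x2, t)) integrable_on cbox 0 1" for j
        by (rule int_slice2[of "\<lambda>z. K j z \<bullet> curlZ F z"]) (intro continuous_intros cK cwF)
      have i1': "(\<lambda>x2. U (x1, t) $ j * (K j (x1, x2, t) \<bullet> curlZ F (x1, x2, t))) integrable_on cbox 0 1" for j
        by (rule integrable_on_mult_right[OF i1])
      have i2: "(\<lambda>x2. G' (x1, x2, t) (X j)) integrable_on cbox 0 1" for j
        by (rule int_slice2[OF cG'])
      have i3: "(\<lambda>x2. Pg (x1, x2, t) \<bullet> curlZ F (x1, x2, t)) integrable_on cbox 0 1"
        unfolding Pg_def by (rule int_slice2[of "\<lambda>z. (\<chi> j. iter_dd [E j] P z) \<bullet> curlZ F z"]) (intro continuous_intros ciP cwF)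
      have i4: "(\<lambda>x2. - (\<Sum>j\<in>UNIV. U (x1, t) $ j * (K j (x1, x2, t) \<bullet> curlZ F (x1, x2, t)))) integrable_on cbox 0 1"
        by (intro integrable_neg integrable_sum integrable_on_mult_right i1) simp
      have "torus_int (\<lambda>x2. Q x1 x2) = 2 * torus_int (\<lambda>x2. - (\<Sum>j\<in>UNIV. U (x1, t) $ j * (K j (x1, x2, t) \<bullet> curlZ F (x1, x2, t)))
          - Pg (x1, x2, t) \<bullet> curlZ F (x1, x2, t))"
        by (simp add: QA Ftw)
      also have "\<dots> = 2 * (- (\<Sum>j\<in>UNIV. U (x1, t) $ j * torus_int (\<lambda>x2. K j (x1, x2, t) \<bullet> curlZ F (x1, x2, t))))"
        unfolding torus_int_def
        by (simp add: integral_diff[OF i4 i3] integral_sum i1' PA[of x1, unfolded torus_int_def])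
      also have "\<dots> = - (\<Sum>j\<in>UNIV. U (x1, t) $ j * torus_int (\<lambda>x2. G' (x1, x2, t) (X j)))"
        by (simp add: KA sum_distrib_left mult.left_commute)
      also have "\<dots> = - torus_int (\<lambda>x2. R x1 x2)"
        unfolding R_def torus_int_def by (simp add: integral_sum integrable_on_mult_right[OF i2])
      finally show ?thesis .
    qed

    \<comment> \<open>integration by parts in x1\<close>
    have outer: "torus_int (\<lambda>x1. R x1 x2) = 0" for x2
    proof -
      have CV: "C1 (\<lambda>y. G (y, x2, t) *\<^sub>R U (y, t))
          (\<lambda>y w. G' (y, x2, t) (w, 0, 0) *\<^sub>R U (y, t) + G (y, x2, t) *\<^sub>R iter_dd [(w, 0)] U (y, t))"
        by (rule C1_scaleR[OF slice1_C1[OF CG] sliceU_C1[OF smooth_C1[OF smU]]])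
      have pG: "G (y + axis j 1, x2, t) = G (y, x2, t)" for y j
        by (simp add: G_def pF1' pCF1)
      have pU: "U (y + axis j 1, t) = U (y, t)" for y j
        using perU[of "(y, t)" j] by simp
      have "torus_int (\<lambda>x. \<Sum>j\<in>UNIV. (G' (x, x2, t) (axis j 1, 0, 0) *\<^sub>R U (x, t) + G (x, x2, t) *\<^sub>R iter_dd [(axis j 1, 0)] U (x, t)) $ j) = 0"
        by (rule ibp_div[OF CV]) (simp add: pG pU)
      moreover have "(\<Sum>j\<in>UNIV. (G' (x, x2, t) (axis j 1, 0, 0) *\<^sub>R U (x, t) + G (x, x2, t) *\<^sub>R iter_dd [(axis j 1, 0)] U (x, t)) $ j) = R x x2" for x
      proof -
        have dv: "(\<Sum>j\<in>UNIV. iter_dd [(axis j 1, 0)] U (x, t) $ j) = 0"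
        proof -
          have "divg (\<lambda>y. u1 y t) x = 0" using div_u1 by blast
          then show ?thesis by (simp add: Ue2 divg_slice[OF smU])
        qed
        have "(\<Sum>j\<in>UNIV. (G' (x, x2, t) (axis j 1, 0, 0) *\<^sub>R U (x, t) + G (x, x2, t) *\<^sub>R iter_dd [(axis j 1, 0)] U (x, t)) $ j)
            = (\<Sum>j\<in>UNIV. U (x, t) $ j * G' (x, x2, t) (X j)) + G (x, x2, t) * (\<Sum>j\<in>UNIV. iter_dd [(axis j 1, 0)] U (x, t) $ j)"
          by (simp add: X_fold sum.distrib sum_distrib_left mult.commute)
        then show ?thesis by (simp add: dv R_def)
      qed
      ultimately show ?thesis by simp
    qed

    have contR: "continuous_on UNIV (\<lambda>(x1, x2). R x1 x2)"
      unfolding R_def split_beta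
      by (intro continuous_intros continuous_on_compose2[OF cU] continuous_on_compose2[OF cG']) auto
    have "torus_int (\<lambda>x1. torus_int (\<lambda>x2. Q x1 x2)) = torus_int (\<lambda>x1. - torus_int (\<lambda>x2. R x1 x2))"
      by (simp only: inner)
    also have "\<dots> = - torus_int (\<lambda>x1. torus_int (\<lambda>x2. R x1 x2))"
      unfolding torus_int_def by (rule integral_neg)
    also have "\<dots> = - torus_int (\<lambda>x2. torus_int (\<lambda>x1. R x1 x2))"
      unfolding torus_int_def
      by (subst integral_swap_continuous) (rule continuous_on_subset[OF contR], auto)
    also have "\<dots> = 0" by (simp add: outer torus_int_def)
    finally show ?thesis .
  qed
  show ?thesis using TD unfolding Tform key .
qed

end
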